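(* Let $f:\mathbb{R}^n\to\mathbb{R}$, $c:\mathbb{R}^n\to\mathbb{R}^m$, and consider Algorithm 1 (described in the context) under the Standing Assumption of the context. Then for every $k\in\mathbb{N}$ the inner loop over $j$ terminates finitely. Moreover, for all $k\in\mathbb{N}$, $$L_k\le L_{\max}:=\max\{L_{-1},\rho L\}\quad\text{and}\quad\gamma_{k,i}\le\gamma_{\max,i}:=\max\{\gamma_{-1,i},\rho\gamma_i\}\ \text{ for all } i\in\{1,\dots,m\}.$$
   Context: Notation: $g_k=\nabla f(x_k)$, $c_k=c(x_k)$, $J_k=\nabla c(x_k)^T$; $\phi(x,\tau)=\tau f(x)+\|c(x)\|_1$; $\Delta q(x,\tau,g,H,d)=-\tau(g^Td+\frac12\max\{d^THd,0\})+\|c(x)\|_1$. $\{H_k\}$ are symmetric with $\|H_k\|_2\le\kappa_H$ and $u^TH_ku\ge\zeta\|u\|_2^2$ whenever $J_ku=0$. Algorithm 1 (inputs $x_0$, $\tau_{-1}>0$, $\epsilon,\sigma,\eta\in(0,1)$, $\rho>1$, $L_{-1}>0$, $\gamma_{-1,i}>0$): at iteration $k$, $(d_k,y_k)$ solves $H_kd_k+J_k^Ty_k=-g_k$, $J_kd_k=-c_k$; stop if $g_k+J_k^Ty_k=0$ and $c_k=0$. Set $\tau_k^{trial}=\infty$ if $g_k^Td_k+\max\{d_k^TH_kd_k,0\}\le0$, else $\frac{(1-\sigma)\|c_k\|_1}{g_k^Td_k+\max\{d_k^TH_kd_k,0\}}$; $\tau_k=\tau_{k-1}$ if $\tau_{k-1}\le\tau_k^{trial}$,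 else $(1-\epsilon)\tau_k^{trial}$. Choose $L_{k,0}\in(0,L_{k-1}]$ and $\gamma_{k,i,0}\in(0,\gamma_{k-1,i}]$. For $j=0,1,\dots$: with $\Lambda_{k,j}=\tau_kL_{k,j}+\sum_i\gamma_{k,i,j}$, $\widehat\alpha_{k,j}=\frac{2(1-\eta)\Delta q(x_k,\tau_k,g_k,H_k,d_k)}{\Lambda_{k,j}\|d_k\|_2^2}$, $\widetilde\alpha_{k,j}=\widehat\alpha_{k,j}-\frac{4\|c_k\|_1}{\Lambda_{k,j}\|d_k\|_2^2}$; $\alpha_{k,j}=\widehat\alpha_{k,j}$ if $\widehat\alpha_{k,j}<1$, $1$ if $\widetilde\alpha_{k,j}\le1\le\widehat\alpha_{k,j}$, $\widetilde\alpha_{k,j}$ if $\widetilde\alpha_{k,j}>1$. Let (SD) be $\phi(x_k+\alpha_{k,j}d_k,\tau_k)\le\phi(x_k,\tau_k)-\eta\alpha_{k,j}\Delta q(x_k,\tau_k,g_k,H_k,d_k)$, (LF) be $f(x_k+\alpha_{k,j}d_k)\le f(x_k)+\alpha_{k,j}g_k^Td_k+\frac12L_{k,j}\alpha_{k,j}^2\|d_k\|_2^2$, (LC$_i$) be $|c_i(x_k+\alpha_{k,j}d_k)|\le|c_i(x_k)+\alpha_{k,j}\nabla c_i(x_k)^Td_k|+\frac12\gamma_{k,i,j}\alpha_{k,j}^2\|d_k\|_2^2$. If (SD) holds, or (LF) and all (LC$_i$) hold: set $L_k=L_{k,j}$, $\gamma_{k,i}=\gamma_{k,i,j}$, $\alpha_k=\alpha_{k,j}$,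 $x_{k+1}=x_k+\alpha_kd_k$ and end the inner loop. Otherwise $L_{k,j+1}=\rho L_{k,j}$ if (LF) fails (else $L_{k,j}$), and $\gamma_{k,i,j+1}=\rho\gamma_{k,i,j}$ if (LC$_i$) fails (else $\gamma_{k,i,j}$). Standing Assumption: there is an open convex set $\mathcal X$ containing all iterates and all trial points $x_k+\alpha_{k,j}d_k$; $f$ is $C^1$ and bounded below on $\mathcal X$, $\nabla f$ is bounded and Lipschitz with constant $L$ on $\mathcal X$; $c$ and $\nabla c^T$ are bounded on $\mathcal X$; each $\nabla c_i$ is Lipschitz with constant $\gamma_i$ on $\mathcal X$; singular values of $\nabla c(x)^T$ bounded away from zero uniformly over $\mathcal X$. *)

theory Defs
  imports "HOL-Analysis.Analysis"
begin

text \<open>Conventions. Vectors in R^n are real^'n, constraint values in R^m are real^'m.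
 gc i x is the gradient of the i-th constraint c_i at x; the Jacobian J(x) has rows gc i x.\<close>

definition l1norm :: "real^'m \<Rightarrow> real" where
  "l1norm v = (\<Sum>i\<in>UNIV. \<bar>v $ i\<bar>)"

definition jac :: "('m \<Rightarrow> real^'n \<Rightarrow> real^'n) \<Rightarrow> real^'n \<Rightarrow> real^'n^'m" where
  "jac gc x = (\<chi> i. gc i x)"

definition merit :: "(real^'n \<Rightarrow> real) \<Rightarrow> (real^'n \<Rightarrow> real^'m) \<Rightarrow> real \<Rightarrow> real^'n \<Rightarrow> real" where
  "merit f c tau x = tau * f x + l1norm (c x)"

definition dq :: "real \<Rightarrow> real^'n \<Rightarrow> real^'n^'n \<Rightarrow> real^'n \<Rightarrow> real^'m \<Rightarrow> real" where
  "dq tau g H d cx = - tau * (g \<bullet> d + 1/2 * max (d \<bullet> (H *v d)) 0) + l1norm cx"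

text \<open>Merit parameter update: returns tau_k from tau_{k-1} (trial value infinity when denominator <= 0).\<close>
definition tau_upd :: "real \<Rightarrow> real \<Rightarrow> real \<Rightarrow> real^'n \<Rightarrow> real^'n^'n \<Rightarrow> real^'n \<Rightarrow> real^'m \<Rightarrow> real" where
  "tau_upd eps sgm taup g H d cx =
     (let den = g \<bullet> d + max (d \<bullet> (H *v d)) 0 in
      if den \<le> 0 then taup
      else (let tr = (1 - sgm) * l1norm cx / den in
            if taup \<le> tr then taup else (1 - eps) * tr))"

definition step_alpha :: "real \<Rightarrow> real \<Rightarrow> real \<Rightarrow> real \<Rightarrow> real \<Rightarrow> real" where
  "step_alpha eta Lam DQ dn2 cl1 =
     (let ah = 2 * (1 - eta) * DQ / (Lam * dn2);
          atl = ah - 4 * cl1 / (Lam * dn2) in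
      if ah < 1 then ah else if atl \<le> 1 then 1 else atl)"

definition alpha_of :: "real \<Rightarrow> real \<Rightarrow> real^'n \<Rightarrow> real^'n^'n \<Rightarrow> real^'n \<Rightarrow> real^'m \<Rightarrow> real \<Rightarrow> ('m \<Rightarrow> real) \<Rightarrow> real" where
  "alpha_of eta tau g H d cx L G =
     step_alpha eta (tau * L + (\<Sum>i\<in>UNIV. G i)) (dq tau g H d cx) ((norm d)\<^sup>2) (l1norm cx)"

definition LF_test :: "(real^'n \<Rightarrow> real) \<Rightarrow> real^'n \<Rightarrow> real^'n \<Rightarrow> real^'n \<Rightarrow> real \<Rightarrow> real \<Rightarrow> bool" where
  "LF_test f x g d a L \<longleftrightarrow>
     f (x + a *\<^sub>R d) \<le> f x + a * (g \<bullet> d) + 1/2 * L * a\<^sup>2 * (norm d)\<^sup>2"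

definition LC_test :: "(real^'n \<Rightarrow> real^'m) \<Rightarrow> ('m \<Rightarrow> real^'n \<Rightarrow> real^'n) \<Rightarrow> real^'n \<Rightarrow> real^'n \<Rightarrow> real \<Rightarrow> real \<Rightarrow> 'm \<Rightarrow> bool" where
  "LC_test c gc x d a G i \<longleftrightarrow>
     \<bar>c (x + a *\<^sub>R d) $ i\<bar> \<le> \<bar>c x $ i + a * (gc i x \<bullet> d)\<bar> + 1/2 * G * a\<^sup>2 * (norm d)\<^sup>2"

definition SD_test :: "(real^'n \<Rightarrow> real) \<Rightarrow> (real^'n \<Rightarrow> real^'m) \<Rightarrow> real \<Rightarrow> real \<Rightarrow> real^'n \<Rightarrow> real^'n \<Rightarrow> real \<Rightarrow> real \<Rightarrow> bool" where
  "SD_test f c eta tau x d a DQ \<longleftrightarrow>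
     merit f c tau (x + a *\<^sub>R d) \<le> merit f c tau x - eta * a * DQ"

text \<open>Updates are applied only while the acceptance test fails
  (after acceptance the values are never used).\<close>
fun inner_LG :: "(real^'n \<Rightarrow> real) \<Rightarrow> (real^'n \<Rightarrow> real^'n) \<Rightarrow> (real^'n \<Rightarrow> real^'m)
   \<Rightarrow> ('m \<Rightarrow> real^'n \<Rightarrow> real^'n)
   \<Rightarrow> real \<Rightarrow> real \<Rightarrow> real^'n \<Rightarrow> real^'n^'n \<Rightarrow> real^'n \<Rightarrow> real \<Rightarrow> real \<Rightarrow> ('m \<Rightarrow> real)
   \<Rightarrow> nat \<Rightarrow> real \<times> ('m \<Rightarrow> real)" where
  "inner_LG f gf c gc eta rho x H d tau L0 G0 0 = (L0, G0)"
| "inner_LG f gf c gc eta rho x H d tau L0 G0 (Suc j) =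
     (let LG = inner_LG f gf c gc eta rho x H d tau L0 G0 j;
          L = fst LG; G = snd LG;
          a = alpha_of eta tau (gf x) H d (c x) L G in
      (if LF_test f x (gf x) d a L then L else rho * L,
       \<lambda>i. if LC_test c gc x d a (G i) i then G i else rho * G i))"

definition trial_alpha :: "(real^'n \<Rightarrow> real) \<Rightarrow> (real^'n \<Rightarrow> real^'n) \<Rightarrow> (real^'n \<Rightarrow> real^'m)
   \<Rightarrow> ('m \<Rightarrow> real^'n \<Rightarrow> real^'n)
   \<Rightarrow> real \<Rightarrow> real \<Rightarrow> real^'n \<Rightarrow> real^'n^'n \<Rightarrow> real^'n \<Rightarrow> real \<Rightarrow> real \<Rightarrow> ('m \<Rightarrow> real)
   \<Rightarrow> nat \<Rightarrow> real" where
  "trial_alpha f gf c gc eta rho x H d tau L0 G0 j =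
     (let LG = inner_LG f gf c gc eta rho x H d tau L0 G0 j in
      alpha_of eta tau (gf x) H d (c x) (fst LG) (snd LG))"

definition accept :: "(real^'n \<Rightarrow> real) \<Rightarrow> (real^'n \<Rightarrow> real^'n) \<Rightarrow> (real^'n \<Rightarrow> real^'m)
   \<Rightarrow> ('m \<Rightarrow> real^'n \<Rightarrow> real^'n)
   \<Rightarrow> real \<Rightarrow> real \<Rightarrow> real^'n \<Rightarrow> real^'n^'n \<Rightarrow> real^'n \<Rightarrow> real \<Rightarrow> real \<Rightarrow> ('m \<Rightarrow> real)
   \<Rightarrow> nat \<Rightarrow> bool" where
  "accept f gf c gc eta rho x H d tau L0 G0 j \<longleftrightarrow>
     (let LG = inner_LG f gf c gc eta rho x H d tau L0 G0 j;
          a = trial_alpha f gf c gc eta rho x H d tau L0 G0 j in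
      SD_test f c eta tau x d a (dq tau (gf x) H d (c x))
      \<or> (LF_test f x (gf x) d a (fst LG) \<and> (\<forall>i. LC_test c gc x d a (snd LG i) i)))"

definition stop_test :: "(real^'n \<Rightarrow> real^'n) \<Rightarrow> (real^'n \<Rightarrow> real^'m) \<Rightarrow> ('m \<Rightarrow> real^'n \<Rightarrow> real^'n)
   \<Rightarrow> real^'n \<Rightarrow> real^'m \<Rightarrow> bool" where
  "stop_test gf c gc x y \<longleftrightarrow> gf x + transpose (jac gc x) *v y = 0 \<and> c x = 0"

end

theory Submission
  imports Defs
begin

lemma line_deriv:
  fixes phi :: "real^'n \<Rightarrow> real"
  assumes "\<forall>w\<in>X. (phi has_derivative (\<lambda>h. g w \<bullet> h)) (at w)" "z + t *\<^sub>R v \<in> X"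
  shows "((\<lambda>t. phi (z + t *\<^sub>R v)) has_real_derivative (g (z + t *\<^sub>R v) \<bullet> v)) (at t)"
proof -
  have d1: "((\<lambda>t. z + t *\<^sub>R v) has_derivative (\<lambda>s. s *\<^sub>R v)) (at t)"
    by (auto intro!: derivative_eq_intros)
  have "((\<lambda>t. phi (z + t *\<^sub>R v)) has_derivative (\<lambda>s. g (z + t *\<^sub>R v) \<bullet> (s *\<^sub>R v))) (at t)"
    using has_derivative_compose[OF d1, of phi "\<lambda>h. g (z + t *\<^sub>R v) \<bullet> h"] assms by (simp add: o_def)
  moreover have "(\<lambda>s. g (z + t *\<^sub>R v) \<bullet> (s *\<^sub>R v)) = (*) (g (z + t *\<^sub>R v) \<bullet> v)"
    by (auto simp: mult.commute)
  ultimately show ?thesis by (simp add: has_field_derivative_def)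
qed

lemma taylor_bound:
  fixes phi :: "real^'n \<Rightarrow> real"
  assumes cx: "convex X" and op: "open X"
    and der: "\<forall>w\<in>X. (phi has_derivative (\<lambda>h. g w \<bullet> h)) (at w)"
    and lip: "C-lipschitz_on X g" and z: "z \<in> X" and zv: "z + v \<in> X"
  shows "\<bar>phi (z + v) - phi z - g z \<bullet> v\<bar> \<le> C/2 * (norm v)^2"
proof -
  have inX: "z + t *\<^sub>R v \<in> X" if "0 \<le> t" "t \<le> 1" for t
  proof -
    have "(1 - t) *\<^sub>R z + t *\<^sub>R (z + v) \<in> X"
      using cx z zv that unfolding convex_def by auto
    moreover have "(1 - t) *\<^sub>R z + t *\<^sub>R (z + v) = z + t *\<^sub>R v"
      by (simp add: algebra_simps)
    ultimately show ?thesis by simp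
  qed
  have gb: "\<bar>(g (z + t *\<^sub>R v) - g z) \<bullet> v\<bar> \<le> C * t * (norm v)^2" if "0 \<le> t" "t \<le> 1" for t
  proof -
    have "\<bar>(g (z + t *\<^sub>R v) - g z) \<bullet> v\<bar> \<le> norm (g (z + t *\<^sub>R v) - g z) * norm v"
      by (rule Cauchy_Schwarz_ineq2)
    also have "norm (g (z + t *\<^sub>R v) - g z) \<le> C * norm (t *\<^sub>R v)"
      using lipschitz_onD[OF lip inX[OF that] z] by (simp add: dist_norm)
    also have "norm (t *\<^sub>R v) = t * norm v" using that by simp
    finally show ?thesis
      by (simp add: power2_eq_square mult_right_mono mult.assoc)
  qed
  have ub: "phi (z + 1 *\<^sub>R v) - 1 * (g z \<bullet> v) - C/2 * 1^2 * (norm v)^2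
      \<le> phi (z + 0 *\<^sub>R v) - 0 * (g z \<bullet> v) - C/2 * 0^2 * (norm v)^2"
  proof (rule DERIV_nonpos_imp_nonincreasing[of 0 1 "\<lambda>t. phi (z + t *\<^sub>R v) - t * (g z \<bullet> v) - C/2 * t^2 * (norm v)^2"])
    fix t :: real assume t: "0 \<le> t" "t \<le> 1"
    have "((\<lambda>t. phi (z + t *\<^sub>R v) - t * (g z \<bullet> v) - C/2 * t^2 * (norm v)^2) has_real_derivative
        (g (z + t *\<^sub>R v) \<bullet> v - g z \<bullet> v - C * t * (norm v)^2)) (at t)"
      using line_deriv[OF der inX[OF t]]
      by (auto intro!: derivative_eq_intros)
    moreover have "g (z + t *\<^sub>R v) \<bullet> v - g z \<bullet> v - C * t * (norm v)^2 \<le> 0"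
      using gb[OF t] by (simp add: inner_diff_left)
    ultimately show "\<exists>y. ((\<lambda>t. phi (z + t *\<^sub>R v) - t * (g z \<bullet> v) - C/2 * t^2 * (norm v)^2) has_real_derivative y) (at t) \<and> y \<le> 0"
      by blast
  qed simp
  have lb: "phi (z + 0 *\<^sub>R v) - 0 * (g z \<bullet> v) + C/2 * 0^2 * (norm v)^2
      \<le> phi (z + 1 *\<^sub>R v) - 1 * (g z \<bullet> v) + C/2 * 1^2 * (norm v)^2"
  proof (rule DERIV_nonneg_imp_nondecreasing[of 0 1 "\<lambda>t. phi (z + t *\<^sub>R v) - t * (g z \<bullet> v) + C/2 * t^2 * (norm v)^2"])
    fix t :: real assume t: "0 \<le> t" "t \<le> 1"
    have "((\<lambda>t. phi (z + t *\<^sub>R v) - t * (g z \<bullet> v) + C/2 * t^2 * (norm v)^2) has_real_derivative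
        (g (z + t *\<^sub>R v) \<bullet> v - g z \<bullet> v + C * t * (norm v)^2)) (at t)"
      using line_deriv[OF der inX[OF t]]
      by (auto intro!: derivative_eq_intros)
    moreover have "g (z + t *\<^sub>R v) \<bullet> v - g z \<bullet> v + C * t * (norm v)^2 \<ge> 0"
      using gb[OF t] by (simp add: inner_diff_left)
    ultimately show "\<exists>y. ((\<lambda>t. phi (z + t *\<^sub>R v) - t * (g z \<bullet> v) + C/2 * t^2 * (norm v)^2) has_real_derivative y) (at t) \<and> y \<ge> 0"
      by blast
  qed simp
  show ?thesis using ub lb unfolding abs_le_iff by simp
qed


lemma inner_loop_lemma:
  fixes f :: "real^'n \<Rightarrow> real" and gf :: "real^'n \<Rightarrow> real^'n"
    and c :: "real^'n \<Rightarrow> real^'m" and gc :: "'m \<Rightarrow> real^'n \<Rightarrow> real^'n"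
    and G0 gam :: "'m \<Rightarrow> real"
  assumes rho: "rho > 1" and L0: "0 < L0" and G0: "\<forall>i. 0 < G0 i"
    and LFok: "\<And>a L. x + a *\<^sub>R d \<in> X \<Longrightarrow> Lf \<le> L \<Longrightarrow> LF_test f x (gf x) d a L"
    and LCok: "\<And>a G i. x + a *\<^sub>R d \<in> X \<Longrightarrow> gam i \<le> G \<Longrightarrow> LC_test c gc x d a G i"
    and trial: "\<And>j. (\<forall>j'<j. \<not> accept f gf c gc eta rho x H d tau L0 G0 j') \<Longrightarrow>
        x + trial_alpha f gf c gc eta rho x H d tau L0 G0 j *\<^sub>R d \<in> X"
  shows "(\<exists>j. accept f gf c gc eta rho x H d tau L0 G0 j) \<and>
    (\<forall>j. accept f gf c gc eta rho x H d tau L0 G0 j \<and> (\<forall>j'<j. \<not> accept f gf c gc eta rho x H d tau L0 G0 j') \<longrightarrow>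
       fst (inner_LG f gf c gc eta rho x H d tau L0 G0 j) \<le> max L0 (rho * Lf) \<and>
       (\<forall>i. snd (inner_LG f gf c gc eta rho x H d tau L0 G0 j) i \<le> max (G0 i) (rho * gam i)))"
proof -
  define LL where "LL = (\<lambda>j. fst (inner_LG f gf c gc eta rho x H d tau L0 G0 j))"
  define GG where "GG = (\<lambda>j. snd (inner_LG f gf c gc eta rho x H d tau L0 G0 j))"
  define tr where "tr = (\<lambda>j. trial_alpha f gf c gc eta rho x H d tau L0 G0 j)"
  define acc where "acc = (\<lambda>j. accept f gf c gc eta rho x H d tau L0 G0 j)"
  have stepL: "LL (Suc j) = (if LF_test f x (gf x) d (tr j) (LL j) then LL j else rho * LL j)" for j
    by (simp add: LL_def tr_def trial_alpha_def Let_def)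
  have stepG: "GG (Suc j) i = (if LC_test c gc x d (tr j) (GG j i) i then GG j i else rho * GG j i)" for j i
    by (simp add: GG_def tr_def trial_alpha_def Let_def)
  have accD: "\<not> acc j \<Longrightarrow> \<not> (LF_test f x (gf x) d (tr j) (LL j) \<and> (\<forall>i. LC_test c gc x d (tr j) (GG j i) i))" for j
    by (simp add: acc_def accept_def LL_def GG_def tr_def Let_def)
  have L00: "LL 0 = L0" and G00: "GG 0 = G0" by (simp_all add: LL_def GG_def)
  have trX: "(\<forall>j'<j. \<not> acc j') \<Longrightarrow> x + tr j *\<^sub>R d \<in> X" for j
    using trial by (simp add: acc_def tr_def)
  have LFf: "x + tr j *\<^sub>R d \<in> X \<Longrightarrow> \<not> LF_test f x (gf x) d (tr j) (LL j) \<Longrightarrow> LL j < Lf" for j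
    using LFok[of "tr j" "LL j"] by force
  have LCf: "x + tr j *\<^sub>R d \<in> X \<Longrightarrow> \<not> LC_test c gc x d (tr j) (GG j i) i \<Longrightarrow> GG j i < gam i" for j i
    using LCok[of "tr j" i "GG j i"] by force
  have pos: "0 < LL j \<and> (\<forall>i. 0 < GG j i)" for j
    using rho by (induction j) (auto simp: L00 G00 L0 G0 stepL stepG)
  have monoL: "LL j \<le> LL (Suc j)" for j using pos[of j] rho by (simp add: stepL)
  have monoG: "GG j i \<le> GG (Suc j) i" for j i using pos[of j] rho by (simp add: stepG)
  have bnd: "(\<forall>j'<j. \<not> acc j') \<longrightarrow> LL j \<le> max L0 (rho * Lf) \<and> (\<forall>i. GG j i \<le> max (G0 i) (rho * gam i))" for j
  proof (induction j)
    case 0 then show ?case by (simp add: L00 G00)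
  next
    case (Suc j)
    show ?case
    proof
      assume na: "\<forall>j'<Suc j. \<not> acc j'"
      then have IH: "LL j \<le> max L0 (rho * Lf) \<and> (\<forall>i. GG j i \<le> max (G0 i) (rho * gam i))"
        using Suc by auto
      have X: "x + tr j *\<^sub>R d \<in> X" using na by (intro trX) auto
      have "LL (Suc j) \<le> max L0 (rho * Lf)"
      proof (cases "LF_test f x (gf x) d (tr j) (LL j)")
        case True then show ?thesis using IH by (simp add: stepL)
      next
        case False
        then have "LL j < Lf" using LFf X by blast
        then have "rho * LL j \<le> rho * Lf" using rho by simp
        then show ?thesis using False by (simp add: stepL)
      qed
      moreover have "GG (Suc j) i \<le> max (G0 i) (rho * gam i)" for i
      proof (cases "LC_test c gc x d (tr j) (GG j i) i")
        case True then show ?thesis using IH by (simp add: stepG)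
      next
        case False
        then have "GG j i < gam i" using LCf X by blast
        then have "rho * GG j i \<le> rho * gam i" using rho by simp
        then show ?thesis using False by (simp add: stepG)
      qed
      ultimately show "LL (Suc j) \<le> max L0 (rho * Lf) \<and> (\<forall>i. GG (Suc j) i \<le> max (G0 i) (rho * gam i))"
        by blast
    qed
  qed
  define Phi where "Phi = (\<lambda>j. LL j * (\<Prod>i\<in>UNIV. GG j i))"
  have Phipos: "0 < Phi j" for j using pos[of j] by (simp add: Phi_def prod_pos)
  have Phistep: "rho * Phi j \<le> Phi (Suc j)" if na: "\<forall>j'\<le>j. \<not> acc j'" for j
  proof -
    have X: "x + tr j *\<^sub>R d \<in> X" using na by (intro trX) auto
    have nt: "\<not> (LF_test f x (gf x) d (tr j) (LL j) \<and> (\<forall>i. LC_test c gc x d (tr j) (GG j i) i))"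
      using na accD by blast
    have pm: "(\<Prod>i\<in>A. GG j i) \<le> (\<Prod>i\<in>A. GG (Suc j) i)" for A
      using pos[of j] monoG by (intro prod_mono) (auto intro: less_imp_le)
    show ?thesis
    proof (cases "LF_test f x (gf x) d (tr j) (LL j)")
      case False
      then have "LL (Suc j) = rho * LL j" by (simp add: stepL)
      then show ?thesis using pm[of UNIV] pos[of j] rho
        by (simp add: Phi_def mult.assoc mult_left_mono)
    next
      case True
      then obtain i0 where i0: "\<not> LC_test c gc x d (tr j) (GG j i0) i0" using nt by blast
      then have g1: "GG (Suc j) i0 = rho * GG j i0" by (simp add: stepG)
      have "(\<Prod>i\<in>UNIV. GG j i) = GG j i0 * (\<Prod>i\<in>UNIV - {i0}. GG j i)"
        by (simp add: prod.remove)
      moreover have "(\<Prod>i\<in>UNIV. GG (Suc j) i) = GG (Suc j) i0 * (\<Prod>i\<in>UNIV - {i0}. GG (Suc j) i)"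
        by (simp add: prod.remove)
      ultimately have rp: "rho * (\<Prod>i\<in>UNIV. GG j i) \<le> (\<Prod>i\<in>UNIV. GG (Suc j) i)"
        using g1 pm[of "UNIV - {i0}"] pos[of j] rho
        by (simp add: mult.assoc mult_left_mono)
      have "LL j * (rho * (\<Prod>i\<in>UNIV. GG j i)) \<le> LL (Suc j) * (\<Prod>i\<in>UNIV. GG (Suc j) i)"
      proof (rule mult_mono[OF monoL[of j] rp])
        show "0 \<le> rho * (\<Prod>i\<in>UNIV. GG j i)" using pos[of j] rho
          by (simp add: prod_nonneg less_imp_le)
        show "0 \<le> LL (Suc j)" using pos[of "Suc j"] by simp
      qed
      then show ?thesis by (simp add: Phi_def mult.left_commute)
    qed
  qed
  have ex: "\<exists>j. acc j"
  proof (rule ccontr)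
    assume "\<not> (\<exists>j. acc j)"
    then have na: "\<forall>j. \<not> acc j" by blast
    have grow: "rho ^ j * Phi 0 \<le> Phi j" for j
    proof (induction j)
      case (Suc j)
      have "rho ^ Suc j * Phi 0 = rho * (rho ^ j * Phi 0)" by simp
      also have "\<dots> \<le> rho * Phi j" using Suc rho by simp
      also have "\<dots> \<le> Phi (Suc j)" using Phistep na by blast
      finally show ?case .
    qed simp
    define M where "M = max L0 (rho * Lf) * (\<Prod>i\<in>UNIV. max (G0 i) (rho * gam i))"
    have PhiM: "Phi j \<le> M" for j
    proof -
      have b: "LL j \<le> max L0 (rho * Lf) \<and> (\<forall>i. GG j i \<le> max (G0 i) (rho * gam i))"
        using bnd na by blast
      have "(\<Prod>i\<in>UNIV. GG j i) \<le> (\<Prod>i\<in>UNIV. max (G0 i) (rho * gam i))"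
        using b pos[of j] by (intro prod_mono) (auto intro: less_imp_le)
      then show ?thesis unfolding Phi_def M_def using b pos[of j]
        by (meson less_imp_le mult_mono prod_nonneg order_trans)
    qed
    obtain n where "M / Phi 0 < rho ^ n" using real_arch_pow[OF rho] by blast
    then have "M < rho ^ n * Phi 0" using Phipos[of 0] by (simp add: divide_less_eq)
    then show False using grow[of n] PhiM[of n] by linarith
  qed
  show ?thesis
    using ex bnd unfolding acc_def LL_def GG_def by blast
qed

theorem lemma2p8:
  fixes f :: "real^'n \<Rightarrow> real" and gf :: "real^'n \<Rightarrow> real^'n"
    and c :: "real^'n \<Rightarrow> real^'m" and gc :: "'m \<Rightarrow> real^'n \<Rightarrow> real^'n"
    and X :: "(real^'n) set" and Lf :: real and gam :: "'m \<Rightarrow> real"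
    and x :: "nat \<Rightarrow> real^'n" and H :: "nat \<Rightarrow> real^'n^'n"
    and d :: "nat \<Rightarrow> real^'n" and y :: "nat \<Rightarrow> real^'m"
    and tau :: "nat \<Rightarrow> real" and tau_m1 eps sgm eta rho Lm1 :: real
    and Gm1 :: "'m \<Rightarrow> real"
    and L0 :: "nat \<Rightarrow> real" and G0 :: "nat \<Rightarrow> 'm \<Rightarrow> real"
    and Lk :: "nat \<Rightarrow> real" and Gk :: "nat \<Rightarrow> 'm \<Rightarrow> real" and alpha :: "nat \<Rightarrow> real"
  defines "active \<equiv> (\<lambda>k. \<forall>k'\<le>k. \<not> stop_test gf c gc (x k') (y k'))"
  assumes params: "tau_m1 > 0" "0 < eps" "eps < 1" "0 < sgm" "sgm < 1" "0 < eta" "eta < 1"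
      "rho > 1" "Lm1 > 0" "\<forall>i. Gm1 i > 0"
    \<comment> \<open>Standing Assumption\<close>
    and X_open: "open X" and X_convex: "convex X"
    and f_deriv: "\<forall>z\<in>X. (f has_derivative (\<lambda>h. gf z \<bullet> h)) (at z)"
    and gf_cont: "continuous_on X gf"
    and f_bdd_below: "\<exists>B. \<forall>z\<in>X. B \<le> f z"
    and gf_bdd: "bounded (gf ` X)"
    and gf_lip: "Lf-lipschitz_on X gf"
    and c_deriv: "\<forall>i. \<forall>z\<in>X. ((\<lambda>w. c w $ i) has_derivative (\<lambda>h. gc i z \<bullet> h)) (at z)"
    and c_bdd: "bounded (c ` X)"
    and gc_bdd: "\<forall>i. bounded (gc i ` X)"
    and gc_lip: "\<forall>i. (gam i)-lipschitz_on X (gc i)"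
    and sing: "\<exists>s>0. \<forall>z\<in>X. \<forall>v. s * norm v \<le> norm (transpose (jac gc z) *v v)"
    \<comment> \<open>iterates and trial points lie in X\<close>
    and iter_X: "\<forall>k. active k \<longrightarrow> x k \<in> X"
    and trial_X: "\<forall>k j. active k \<and> (\<forall>j'<j. \<not> accept f gf c gc eta rho (x k) (H k) (d k) (tau k) (L0 k) (G0 k) j')
        \<longrightarrow> x k + trial_alpha f gf c gc eta rho (x k) (H k) (d k) (tau k) (L0 k) (G0 k) j *\<^sub>R d k \<in> X"
    \<comment> \<open>conditions on H_k\<close>
    and H_cond: "\<exists>kH. \<exists>zeta>0. \<forall>k. active k \<longrightarrow>
        transpose (H k) = H k \<and> onorm (\<lambda>v. H k *v v) \<le> kH \<and>
        (\<forall>u. jac gc (x k) *v u = 0 \<longrightarrow> zeta * (norm u)\<^sup>2 \<le> u \<bullet> (H k *v u))"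
    \<comment> \<open>Algorithm 1\<close>
    and newton: "\<forall>k. active k \<longrightarrow>
        H k *v d k + transpose (jac gc (x k)) *v y k = - gf (x k) \<and> jac gc (x k) *v d k = - c (x k)"
    and tau_rule: "\<forall>k. active k \<longrightarrow>
        tau k = tau_upd eps sgm (if k = 0 then tau_m1 else tau (k - 1)) (gf (x k)) (H k) (d k) (c (x k))"
    and L0_rule: "\<forall>k. active k \<longrightarrow> 0 < L0 k \<and> L0 k \<le> (if k = 0 then Lm1 else Lk (k - 1))"
    and G0_rule: "\<forall>k i. active k \<longrightarrow> 0 < G0 k i \<and> G0 k i \<le> (if k = 0 then Gm1 i else Gk (k - 1) i)"
    and output_rule: "\<forall>k j. active k \<and> accept f gf c gc eta rho (x k) (H k) (d k) (tau k) (L0 k) (G0 k) j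
        \<and> (\<forall>j'<j. \<not> accept f gf c gc eta rho (x k) (H k) (d k) (tau k) (L0 k) (G0 k) j') \<longrightarrow>
        Lk k = fst (inner_LG f gf c gc eta rho (x k) (H k) (d k) (tau k) (L0 k) (G0 k) j) \<and>
        Gk k = snd (inner_LG f gf c gc eta rho (x k) (H k) (d k) (tau k) (L0 k) (G0 k) j) \<and>
        alpha k = trial_alpha f gf c gc eta rho (x k) (H k) (d k) (tau k) (L0 k) (G0 k) j \<and>
        x (Suc k) = x k + alpha k *\<^sub>R d k"
  shows "\<forall>k. active k \<longrightarrow>
      (\<exists>j. accept f gf c gc eta rho (x k) (H k) (d k) (tau k) (L0 k) (G0 k) j) \<and>
      Lk k \<le> max Lm1 (rho * Lf) \<and> (\<forall>i. Gk k i \<le> max (Gm1 i) (rho * gam i))"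
proof -
  let ?acc = "\<lambda>k j. accept f gf c gc eta rho (x k) (H k) (d k) (tau k) (L0 k) (G0 k) j"
  have rho: "rho > 1" using params by simp
  have LFok: "LF_test f z (gf z) v a L" if "z \<in> X" "z + a *\<^sub>R v \<in> X" "Lf \<le> L" for z v a L
  proof -
    have "\<bar>f (z + a *\<^sub>R v) - f z - gf z \<bullet> (a *\<^sub>R v)\<bar> \<le> Lf/2 * (norm (a *\<^sub>R v))^2"
      by (rule taylor_bound[OF X_convex X_open f_deriv gf_lip that(1,2)])
    moreover have "(norm (a *\<^sub>R v))^2 = a^2 * (norm v)^2" by (simp add: power_mult_distrib)
    moreover have "Lf/2 * (a^2 * (norm v)^2) \<le> 1/2 * L * a^2 * (norm v)^2"
      using mult_right_mono[OF that(3), of "a^2 * (norm v)^2"] by (simp add: mult.assoc)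
    ultimately have "\<bar>f (z + a *\<^sub>R v) - f z - a * (gf z \<bullet> v)\<bar> \<le> 1/2 * L * a^2 * (norm v)^2"
      by simp
    then show ?thesis unfolding LF_test_def by linarith
  qed
  have LCok: "LC_test c gc z v a G i" if "z \<in> X" "z + a *\<^sub>R v \<in> X" "gam i \<le> G" for z v a G i
  proof -
    have der: "\<forall>w\<in>X. ((\<lambda>w. c w $ i) has_derivative (\<lambda>h. gc i w \<bullet> h)) (at w)" using c_deriv by blast
    have lip: "(gam i)-lipschitz_on X (gc i)" using gc_lip by blast
    have "\<bar>c (z + a *\<^sub>R v) $ i - c z $ i - gc i z \<bullet> (a *\<^sub>R v)\<bar> \<le> gam i/2 * (norm (a *\<^sub>R v))^2"
      by (rule taylor_bound[OF X_convex X_open der lip that(1,2)])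
    moreover have "(norm (a *\<^sub>R v))^2 = a^2 * (norm v)^2" by (simp add: power_mult_distrib)
    moreover have "gam i/2 * (a^2 * (norm v)^2) \<le> 1/2 * G * a^2 * (norm v)^2"
      using mult_right_mono[OF that(3), of "a^2 * (norm v)^2"] by (simp add: mult.assoc)
    moreover have "\<bar>c (z + a *\<^sub>R v) $ i\<bar> \<le> \<bar>c z $ i + a * (gc i z \<bullet> v)\<bar>
        + \<bar>c (z + a *\<^sub>R v) $ i - c z $ i - gc i z \<bullet> (a *\<^sub>R v)\<bar>"
      using abs_triangle_ineq[of "c z $ i + a * (gc i z \<bullet> v)" "c (z + a *\<^sub>R v) $ i - c z $ i - a * (gc i z \<bullet> v)"]
      by simp
    ultimately show ?thesis unfolding LC_test_def by (simp only:)
  qed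
  have step: "(\<exists>j. ?acc k j) \<and> Lk k \<le> max Lm1 (rho * Lf) \<and> (\<forall>i. Gk k i \<le> max (Gm1 i) (rho * gam i))"
    if act: "active k" and Lb: "L0 k \<le> max Lm1 (rho * Lf)" and Gb: "\<forall>i. G0 k i \<le> max (Gm1 i) (rho * gam i)" for k
  proof -
    have xk: "x k \<in> X" using iter_X act by blast
    have L0p: "0 < L0 k" using conjunct1[OF mp[OF spec[OF L0_rule, of k] act]] .
    have G0p: "\<forall>i. 0 < G0 k i" using G0_rule act by simp
    have LFk: "\<And>a L. x k + a *\<^sub>R d k \<in> X \<Longrightarrow> Lf \<le> L \<Longrightarrow> LF_test f (x k) (gf (x k)) (d k) a L"
      by (rule LFok[OF xk])
    have LCk: "\<And>a G i. x k + a *\<^sub>R d k \<in> X \<Longrightarrow> gam i \<le> G \<Longrightarrow> LC_test c gc (x k) (d k) a G i"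
      by (rule LCok[OF xk])
    have trk: "x k + trial_alpha f gf c gc eta rho (x k) (H k) (d k) (tau k) (L0 k) (G0 k) j *\<^sub>R d k \<in> X"
      if "\<forall>j'<j. \<not> ?acc k j'" for j
      using mp[OF trial_X[THEN spec[of _ k], THEN spec[of _ j]] conjI[OF act that]] .
    have I: "(\<exists>j. ?acc k j) \<and>
      (\<forall>j. ?acc k j \<and> (\<forall>j'<j. \<not> ?acc k j') \<longrightarrow>
       fst (inner_LG f gf c gc eta rho (x k) (H k) (d k) (tau k) (L0 k) (G0 k) j) \<le> max (L0 k) (rho * Lf) \<and>
       (\<forall>i. snd (inner_LG f gf c gc eta rho (x k) (H k) (d k) (tau k) (L0 k) (G0 k) j) i \<le> max (G0 k i) (rho * gam i)))"
      by (rule inner_loop_lemma[of rho "L0 k" "G0 k" "x k" "d k" X Lf f gf gam c gc eta "H k" "tau k",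
            OF rho L0p G0p LFk LCk trk])
    then have "\<exists>j. ?acc k j" by (rule conjunct1)
    define j0 where "j0 = (LEAST j. ?acc k j)"
    have j0a: "?acc k j0" unfolding j0_def by (rule LeastI_ex[of "?acc k"]) fact
    have j0b: "\<forall>j'<j0. \<not> ?acc k j'" unfolding j0_def
      by (intro allI impI) (rule not_less_Least[of _ "?acc k"], assumption)
    note j0 = j0a j0b
    note o = mp[OF output_rule[THEN spec[of _ k], THEN spec[of _ j0]] conjI[OF act conjI[OF j0]]]
    have out: "Lk k = fst (inner_LG f gf c gc eta rho (x k) (H k) (d k) (tau k) (L0 k) (G0 k) j0) \<and>
        Gk k = snd (inner_LG f gf c gc eta rho (x k) (H k) (d k) (tau k) (L0 k) (G0 k) j0)"
      by (rule conjI[OF conjunct1[OF o] conjunct1[OF conjunct2[OF o]]])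
    have bb: "fst (inner_LG f gf c gc eta rho (x k) (H k) (d k) (tau k) (L0 k) (G0 k) j0) \<le> max (L0 k) (rho * Lf) \<and>
       (\<forall>i. snd (inner_LG f gf c gc eta rho (x k) (H k) (d k) (tau k) (L0 k) (G0 k) j0) i \<le> max (G0 k i) (rho * gam i))"
      using mp[OF spec[OF conjunct2[OF I], of j0] conjI[OF j0]] .
    have l1: "Lk k \<le> max (L0 k) (rho * Lf)" by (subst conjunct1[OF out]) (rule conjunct1[OF bb])
    have g1: "Gk k i \<le> max (G0 k i) (rho * gam i)" for i by (subst conjunct2[OF out]) (rule spec[OF conjunct2[OF bb]])
    have m1: "max (L0 k) (rho * Lf) \<le> max Lm1 (rho * Lf)" using Lb by (simp only: max.bounded_iff max.cobounded2 simp_thms)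
    have l2: "Lk k \<le> max Lm1 (rho * Lf)" by (rule order_trans[OF l1 m1])
    have m2: "max (G0 k i) (rho * gam i) \<le> max (Gm1 i) (rho * gam i)" for i
      using spec[OF Gb, of i] by (simp only: max.bounded_iff max.cobounded2 simp_thms)
    have g2: "Gk k i \<le> max (Gm1 i) (rho * gam i)" for i by (rule order_trans[OF g1 m2])
    show ?thesis using conjunct1[OF I] l2 g2 by blast
  qed
  have main: "active k \<longrightarrow> (\<exists>j. ?acc k j) \<and> Lk k \<le> max Lm1 (rho * Lf) \<and> (\<forall>i. Gk k i \<le> max (Gm1 i) (rho * gam i))" for k
  proof (induction k)
    case 0
    show ?case
    proof
      assume a: "active 0"
      have l: "L0 0 \<le> max Lm1 (rho * Lf)" using conjunct2[OF mp[OF spec[OF L0_rule, of 0] a]] by simp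
      have g: "\<forall>i. G0 0 i \<le> max (Gm1 i) (rho * gam i)"
      proof
        fix i show "G0 0 i \<le> max (Gm1 i) (rho * gam i)"
          using conjunct2[OF mp[OF spec[OF spec[OF G0_rule, of 0], of i] a]] by simp
      qed
      show "(\<exists>j. ?acc 0 j) \<and> Lk 0 \<le> max Lm1 (rho * Lf) \<and> (\<forall>i. Gk 0 i \<le> max (Gm1 i) (rho * gam i))"
        by (rule step[OF a l g])
    qed
  next
    case (Suc k)
    show ?case
    proof
      assume a: "active (Suc k)"
      then have "active k" unfolding active_def by simp
      with Suc.IH have ih: "Lk k \<le> max Lm1 (rho * Lf)" "\<forall>i. Gk k i \<le> max (Gm1 i) (rho * gam i)" by simp_all
      have l: "L0 (Suc k) \<le> max Lm1 (rho * Lf)"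
        using conjunct2[OF mp[OF spec[OF L0_rule, of "Suc k"] a]] ih(1) by simp
      have g: "\<forall>i. G0 (Suc k) i \<le> max (Gm1 i) (rho * gam i)"
      proof
        fix i show "G0 (Suc k) i \<le> max (Gm1 i) (rho * gam i)"
          using conjunct2[OF mp[OF spec[OF spec[OF G0_rule, of "Suc k"], of i] a]] ih(2)[rule_format, of i] by simp
      qed
      show "(\<exists>j. ?acc (Suc k) j) \<and> Lk (Suc k) \<le> max Lm1 (rho * Lf) \<and> (\<forall>i. Gk (Suc k) i \<le> max (Gm1 i) (rho * gam i))"
        by (rule step[OF a l g])
    qed
  qed
  show ?thesis using main by blast
qed

end
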